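(* In the inexact augmented Lagrangian method described in the context, for all $t\ge1$, $$\|\lambda_t-\lambda^*\|\le\sqrt{\|\lambda_1-\lambda^*\|^2+2\beta\sum_{i=1}^{t-1}\epsilon_i}.$$
   Context: Problem: $\min_{x\in\mathcal{X}}f(x)$ s.t. $Ax=b$, with $f:\mathbb{R}^n\to\mathbb{R}$ convex and differentiable, $\mathcal{X}\subseteq\mathbb{R}^n$ nonempty, closed, bounded and convex, $A\in\mathbb{R}^{m\times n}$, $b\in\mathbb{R}^m$. Augmented Lagrangian $\mathcal{L}^\beta(x,\lambda)=f(x)+\langle\lambda,Ax-b\rangle+\frac{\beta}{2}\|Ax-b\|^2$, $\beta>0$; dual function $d(\lambda)=\min_{x\in\mathcal{X}}\mathcal{L}^\beta(x,\lambda)$; $\lambda^*$ is a maximizer of $d$ (assumed to exist); Euclidean norms. Method: given $x_1\in\mathcal{X}$, $\lambda_1$, nonnegative $(\epsilon_t)$, for $t\ge1$ choose $x_{t+1}\in\mathcal{X}$ with $\mathcal{L}^\beta(x_{t+1},\lambda_t)-d(\lambda_t)\le\epsilon_t$ and set $\lambda_{t+1}=\lambda_t+\frac{\beta}{2}(Ax_{t+1}-b)$. *)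

theory Defs
  imports "HOL-Analysis.Analysis"
begin

definition aug_lagr ::
  "(real^'n \<Rightarrow> real) \<Rightarrow> real^'n^'m \<Rightarrow> real^'m \<Rightarrow> real \<Rightarrow> real^'n \<Rightarrow> real^'m \<Rightarrow> real" where
  "aug_lagr f A b \<beta> x lam = f x + inner lam (A *v x - b) + \<beta> / 2 * (norm (A *v x - b))\<^sup>2"

text \<open>Dual function d(lambda) = min over X of the augmented Lagrangian (written as Inf; the
  minimum is attained since X is compact and the Lagrangian continuous).\<close>
definition dual_fun ::
  "(real^'n \<Rightarrow> real) \<Rightarrow> (real^'n) set \<Rightarrow> real^'n^'m \<Rightarrow> real^'m \<Rightarrow> real \<Rightarrow> real^'m \<Rightarrow> real" where
  "dual_fun f X A b \<beta> lam = (INF x\<in>X. aug_lagr f A b \<beta> x lam)"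

end

theory Submission
  imports Defs
begin

lemma aug_cont:
  assumes "continuous_on UNIV f"
  shows "continuous_on S (\<lambda>x. aug_lagr f A b \<beta> x lam)"
  unfolding aug_lagr_def
  by (intro continuous_intros continuous_on_subset[OF assms]) (auto intro: linear_continuous_on linear_linear matrix_vector_mul_linear)

lemma aug_shift:
  "aug_lagr f A b \<beta> x mu = aug_lagr f A b \<beta> x lam + inner (mu - lam) (A *v x - b)"
  unfolding aug_lagr_def by (simp add: inner_diff_left)

lemma norm_comb:
  fixes a c :: "'a::real_inner"
  shows "(norm ((1 - s) *\<^sub>R a + s *\<^sub>R c))\<^sup>2 = (1 - s) * (norm a)\<^sup>2 + s * (norm c)\<^sup>2 - s * (1 - s) * (norm (c - a))\<^sup>2"
proof -
  have h1: "inner ((1 - s) *\<^sub>R a + s *\<^sub>R c) ((1 - s) *\<^sub>R a + s *\<^sub>R c) = (1 - s)\<^sup>2 * inner a a + 2 * (s * (1 - s)) * inner a c + s\<^sup>2 * inner c c"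
    by (simp add: inner_add_left inner_add_right inner_commute[of c a] algebra_simps power2_eq_square)
  have h2: "inner (c - a) (c - a) = inner c c - 2 * inner a c + inner a a"
    by (simp add: inner_diff_left inner_diff_right inner_commute[of c a])
  show ?thesis unfolding power2_norm_eq_inner h1 h2 by (simp add: algebra_simps power2_eq_square)
qed

lemma strong:
  assumes fc: "convex_on UNIV f" and Xc: "convex X" and b0: "\<beta> > 0"
    and xs: "xs \<in> X" and xsmin: "\<And>y. y \<in> X \<Longrightarrow> aug_lagr f A b \<beta> xs lam \<le> aug_lagr f A b \<beta> y lam"
    and x: "x \<in> X"
  shows "aug_lagr f A b \<beta> x lam \<ge> aug_lagr f A b \<beta> xs lam + \<beta>/2 * (norm ((A *v x - b) - (A *v xs - b)))\<^sup>2"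
proof -
  define L where "L = (\<lambda>y. aug_lagr f A b \<beta> y lam)"
  define D where "D = (norm ((A *v x - b) - (A *v xs - b)))\<^sup>2"
  have D0: "D \<ge> 0" unfolding D_def by simp
  have key: "L xs \<le> L x - \<beta>/2 * (1 - s) * D" if s0: "0 < s" and s1: "s \<le> 1" for s
  proof -
    define z where "z = (1 - s) *\<^sub>R xs + s *\<^sub>R x"
    have zX: "z \<in> X" unfolding z_def using Xc xs x s0 s1 by (simp add: convex_alt)
    have uz: "A *v z - b = (1 - s) *\<^sub>R (A *v xs - b) + s *\<^sub>R (A *v x - b)"
      unfolding z_def by (simp add: algebra_simps)
    have fz: "f z \<le> (1 - s) * f xs + s * f x"
      unfolding z_def using convex_onD[OF fc, of s xs x] s0 s1 by simp
    have lin: "inner lam (A *v z - b) = (1 - s) * inner lam (A *v xs - b) + s * inner lam (A *v x - b)"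
      unfolding uz by (simp add: inner_simps)
    have nz: "(norm (A *v z - b))\<^sup>2 = (1 - s) * (norm (A *v xs - b))\<^sup>2 + s * (norm (A *v x - b))\<^sup>2 - s * (1 - s) * D"
      unfolding uz D_def by (rule norm_comb)
    have Le: "\<And>y. L y = f y + inner lam (A *v y - b) + \<beta> / 2 * (norm (A *v y - b))\<^sup>2"
      unfolding L_def aug_lagr_def by simp
    have "L z \<le> (1 - s) * L xs + s * L x - \<beta>/2 * s * (1 - s) * D"
      unfolding Le lin nz using fz by (simp add: field_simps)
    moreover have "L xs \<le> L z" unfolding L_def using xsmin zX by simp
    ultimately have "s * L xs \<le> s * L x - s * (\<beta>/2 * (1 - s) * D)" by (simp add: algebra_simps)
    then have "s * (L xs + \<beta>/2 * (1 - s) * D) \<le> s * L x" by (simp add: algebra_simps)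
    then have "L xs + \<beta>/2 * (1 - s) * D \<le> L x" using s0 by simp
    then show ?thesis by simp
  qed
  show ?thesis
  proof (rule ccontr)
    assume "\<not> ?thesis"
    then have lt: "L x < L xs + \<beta>/2 * D" unfolding L_def D_def by simp
    define \<delta> where "\<delta> = L xs + \<beta>/2 * D - L x"
    have d0: "\<delta> > 0" using lt unfolding \<delta>_def by simp
    have Lx: "L xs \<le> L x" unfolding L_def using xsmin x by simp
    have "\<beta>/2 * D > 0" using d0 Lx unfolding \<delta>_def by linarith
    then have Dpos: "D > 0" using b0 by (simp add: zero_less_mult_iff)
    define s where "s = \<delta> / (\<beta> * D)"
    have s0: "s > 0" unfolding s_def using d0 Dpos b0 by simp
    have "\<delta> \<le> \<beta>/2 * D" using Lx unfolding \<delta>_def by simp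
    then have s1: "s \<le> 1/2" unfolding s_def using Dpos b0 by (simp add: field_simps)
    have "\<beta>/2 * (1 - s) * D = \<beta>/2 * D - \<delta>/2" unfolding s_def using Dpos b0 by (simp add: field_simps)
    moreover have "L xs \<le> L x - \<beta>/2 * (1 - s) * D" using key[OF s0] s1 by simp
    ultimately have "L xs \<le> L x - (\<beta>/2 * D - \<delta>/2)" by (simp add: diff_divide_distrib)
    then show False using lt unfolding \<delta>_def by (simp add: field_simps)
  qed
qed

lemma norm_add_sq_le:
  fixes a c :: "'a::real_normed_vector"
  shows "(norm (a + c))\<^sup>2 \<le> 2 * (norm a)\<^sup>2 + 2 * (norm c)\<^sup>2"
proof -
  have "norm (a + c) \<le> norm a + norm c" by (rule norm_triangle_ineq)
  then have "(norm (a + c))\<^sup>2 \<le> (norm a + norm c)\<^sup>2" by (simp add: power_mono)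
  also have "\<dots> \<le> 2 * (norm a)\<^sup>2 + 2 * (norm c)\<^sup>2"
    using sum_squares_bound[of "norm a" "norm c"] by (simp add: power2_eq_square algebra_simps)
  finally show ?thesis .
qed

lemma norm_diff_sq:
  fixes a c :: "'a::real_inner"
  shows "(norm (a - c))\<^sup>2 = (norm a)\<^sup>2 - 2 * inner a c + (norm c)\<^sup>2"
  by (simp add: power2_norm_eq_inner inner_diff_left inner_diff_right inner_commute[of c a])

lemma norm_add_sq:
  fixes a c :: "'a::real_inner"
  shows "(norm (a + c))\<^sup>2 = (norm a)\<^sup>2 + 2 * inner a c + (norm c)\<^sup>2"
  by (simp add: power2_norm_eq_inner inner_add_left inner_add_right inner_commute[of c a])

lemma attain_min:
  assumes fcont: "continuous_on UNIV f" and Xcomp: "compact X" and Xne: "X \<noteq> {}"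
  shows "\<exists>xs\<in>X. (\<forall>y\<in>X. aug_lagr f A b \<beta> xs mu \<le> aug_lagr f A b \<beta> y mu)
          \<and> dual_fun f X A b \<beta> mu = aug_lagr f A b \<beta> xs mu
          \<and> (\<forall>y\<in>X. dual_fun f X A b \<beta> mu \<le> aug_lagr f A b \<beta> y mu)"
proof -
  obtain xs where xs: "xs \<in> X" and mn: "\<forall>y\<in>X. aug_lagr f A b \<beta> xs mu \<le> aug_lagr f A b \<beta> y mu"
    using continuous_attains_inf[OF Xcomp Xne aug_cont[OF fcont]] by blast
  have bdd: "bdd_below ((\<lambda>y. aug_lagr f A b \<beta> y mu) ` X)"
    using mn by (auto intro: bdd_belowI2)
  have low: "\<forall>y\<in>X. dual_fun f X A b \<beta> mu \<le> aug_lagr f A b \<beta> y mu"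
    unfolding dual_fun_def using bdd by (auto intro: cINF_lower)
  have "dual_fun f X A b \<beta> mu \<ge> aug_lagr f A b \<beta> xs mu"
    unfolding dual_fun_def using mn Xne by (auto intro: cINF_greatest)
  then have "dual_fun f X A b \<beta> mu = aug_lagr f A b \<beta> xs mu" using low xs by (meson order_antisym)
  then show ?thesis using xs mn low by blast
qed

lemma step:
  assumes fcont: "continuous_on UNIV f" and fc: "convex_on UNIV f"
    and Xc: "convex X" and Xcomp: "compact X" and Xne: "X \<noteq> {}" and b0: "\<beta> > 0"
    and lstar_max: "\<And>\<mu>. dual_fun f X A b \<beta> \<mu> \<le> dual_fun f X A b \<beta> lstar"
    and xh: "xh \<in> X"
    and ineq: "aug_lagr f A b \<beta> xh lam - dual_fun f X A b \<beta> lam \<le> e"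
  shows "inner (A *v xh - b) (lam - lstar) + \<beta>/4 * (norm (A *v xh - b))\<^sup>2 \<le> 2 * e"
proof -
  define L where "L = (\<lambda>y mu. aug_lagr f A b \<beta> y mu)"
  define d where "d = dual_fun f X A b \<beta>"
  define g where "g = A *v xh - b"
  obtain xs where xs: "xs \<in> X" and mn: "\<forall>y\<in>X. L xs lam \<le> L y lam"
    and dl: "d lam = L xs lam"
    using attain_min[OF fcont Xcomp Xne, of A b \<beta> lam] unfolding L_def d_def by blast
  define us where "us = A *v xs - b"
  have sc: "\<And>y. y \<in> X \<Longrightarrow> L y lam \<ge> L xs lam + \<beta>/2 * (norm ((A *v y - b) - us))\<^sup>2"
    unfolding L_def us_def using strong[OF fc Xc b0 xs] mn unfolding L_def by blast
  have ge: "\<beta>/2 * (norm (g - us))\<^sup>2 \<le> e"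
    using sc[OF xh] ineq dl unfolding g_def L_def d_def by simp
  define mu where "mu = lam + (\<beta>/2) *\<^sub>R g"
  have lowmu: "L y mu \<ge> d lam - e + \<beta>/4 * (norm g)\<^sup>2" if y: "y \<in> X" for y
  proof -
    define u where "u = A *v y - b"
    have "(norm (u - g))\<^sup>2 = (norm ((u - us) + (us - g)))\<^sup>2" by simp
    also have "\<dots> \<le> 2 * (norm (u - us))\<^sup>2 + 2 * (norm (us - g))\<^sup>2" by (rule norm_add_sq_le)
    finally have t1: "(norm (u - g))\<^sup>2 \<le> 2 * (norm (u - us))\<^sup>2 + 2 * (norm (g - us))\<^sup>2"
      by (simp add: norm_minus_commute)
    have t2: "L y lam \<ge> d lam + \<beta>/2 * (norm (u - us))\<^sup>2" using sc[OF y] dl unfolding u_def by simp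
    have t3: "L y lam \<ge> d lam - e + \<beta>/4 * (norm (u - g))\<^sup>2"
    proof -
      have "\<beta>/4 * (norm (u - g))\<^sup>2 \<le> \<beta>/4 * (2 * (norm (u - us))\<^sup>2 + 2 * (norm (g - us))\<^sup>2)"
        using t1 b0 by (simp add: mult_left_mono)
      then show ?thesis using t2 ge by (simp add: algebra_simps)
    qed
    have t4: "L y mu = L y lam + (\<beta>/2) * inner g u"
      unfolding L_def mu_def u_def by (simp add: aug_shift[of f A b \<beta> y "lam + (\<beta>/2) *\<^sub>R g" lam])
    have t5: "\<beta>/4 * (norm (u - g))\<^sup>2 + (\<beta>/2) * inner g u = \<beta>/4 * (norm u)\<^sup>2 + \<beta>/4 * (norm g)\<^sup>2"
      unfolding norm_diff_sq by (simp add: inner_commute[of u g] algebra_simps)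
    have "\<beta>/4 * (norm u)\<^sup>2 \<ge> 0" using b0 by simp
    then show ?thesis using t3 t4 t5 by linarith
  qed
  have dmu: "d mu \<ge> d lam - e + \<beta>/4 * (norm g)\<^sup>2"
  proof -
    have "\<forall>y\<in>X. d lam - e + \<beta>/4 * (norm g)\<^sup>2 \<le> aug_lagr f A b \<beta> y mu" using lowmu unfolding L_def by blast
    then have "d lam - e + \<beta>/4 * (norm g)\<^sup>2 \<le> (INF y\<in>X. aug_lagr f A b \<beta> y mu)"
      using Xne by (intro cINF_greatest) auto
    then show ?thesis unfolding d_def dual_fun_def[of f X A b \<beta> mu] .
  qed
  obtain xs2 where "\<forall>y\<in>X. d lstar \<le> L y lstar"
    using attain_min[OF fcont Xcomp Xne, of A b \<beta> lstar] unfolding L_def d_def by blast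
  then have "d lstar \<le> L xh lstar" using xh by blast
  also have "\<dots> = L xh lam + inner (lstar - lam) g"
    unfolding L_def g_def by (rule aug_shift)
  also have "\<dots> \<le> d lam + e + inner (lstar - lam) g" using ineq unfolding L_def d_def by simp
  finally have "d mu \<le> d lam + e + inner (lstar - lam) g" using lstar_max[of mu] unfolding d_def by simp
  with dmu have "\<beta>/4 * (norm g)\<^sup>2 + inner g (lam - lstar) \<le> 2 * e"
    by (simp add: inner_diff_left inner_diff_right inner_commute[of g] algebra_simps)
  then show ?thesis unfolding g_def by simp
qed

theorem lemma10:
  fixes f :: "real^'n \<Rightarrow> real"
    and X :: "(real^'n) set"
    and A :: "real^'n^'m" and b :: "real^'m"
    and \<beta> :: real
    and lstar :: "real^'m"
    and x :: "nat \<Rightarrow> real^'n" and lam :: "nat \<Rightarrow> real^'m"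
    and \<epsilon> :: "nat \<Rightarrow> real"
  assumes f_convex: "convex_on UNIV f"
    and f_diff: "\<And>z. f differentiable (at z)"
    and X_ne: "X \<noteq> {}" and X_closed: "closed X" and X_bounded: "bounded X"
    and X_convex: "convex X"
    and beta_pos: "\<beta> > 0"
    and lstar_max: "\<And>\<mu>. dual_fun f X A b \<beta> \<mu> \<le> dual_fun f X A b \<beta> lstar"
    and eps_nonneg: "\<And>t. \<epsilon> t \<ge> 0"
    and x1: "x 1 \<in> X"
    and x_in: "\<And>t. t \<ge> 1 \<Longrightarrow> x (t + 1) \<in> X"
    and x_inexact: "\<And>t. t \<ge> 1 \<Longrightarrow>
        aug_lagr f A b \<beta> (x (t + 1)) (lam t) - dual_fun f X A b \<beta> (lam t) \<le> \<epsilon> t"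
    and lam_upd: "\<And>t. t \<ge> 1 \<Longrightarrow> lam (t + 1) = lam t + (\<beta> / 2) *\<^sub>R (A *v x (t + 1) - b)"
    and t_ge: "t \<ge> 1"
  shows "norm (lam t - lstar) \<le> sqrt ((norm (lam 1 - lstar))\<^sup>2 + 2 * \<beta> * (\<Sum>i = 1..t - 1. \<epsilon> i))"
proof -
  have fcont: "continuous_on UNIV f"
    using f_diff by (intro differentiable_imp_continuous_on) (simp add: differentiable_on_def)
  have Xcomp: "compact X" using X_closed X_bounded by (simp add: compact_eq_bounded_closed)
  have sq: "(norm (lam t - lstar))\<^sup>2 \<le> (norm (lam 1 - lstar))\<^sup>2 + 2 * \<beta> * (\<Sum>i = 1..t - 1. \<epsilon> i)"
    using t_ge
  proof (induction t rule: nat_induct_at_least)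
    case base
    then show ?case by simp
  next
    case (Suc n)
    define g where "g = A *v x (n + 1) - b"
    have st: "inner g (lam n - lstar) + \<beta>/4 * (norm g)\<^sup>2 \<le> 2 * \<epsilon> n"
      unfolding g_def
      by (rule step[OF fcont f_convex X_convex Xcomp X_ne beta_pos lstar_max x_in[OF Suc.hyps] x_inexact[OF Suc.hyps]])
    have "lam (Suc n) - lstar = (lam n - lstar) + (\<beta>/2) *\<^sub>R g"
      using lam_upd[OF Suc.hyps] unfolding g_def by simp
    then have "(norm (lam (Suc n) - lstar))\<^sup>2 = (norm ((lam n - lstar) + (\<beta>/2) *\<^sub>R g))\<^sup>2" by (simp only:)
    also have "\<dots> = (norm (lam n - lstar))\<^sup>2 + \<beta> * (inner g (lam n - lstar) + \<beta>/4 * (norm g)\<^sup>2)"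
      unfolding norm_add_sq[of "lam n - lstar"] 
      using beta_pos by (simp add: inner_commute[of g "lam n - lstar"] inner_commute[of g lstar] inner_commute[of g "lam n"] inner_diff_left power_mult_distrib algebra_simps power2_eq_square)
    also have "\<dots> \<le> (norm (lam n - lstar))\<^sup>2 + \<beta> * (2 * \<epsilon> n)"
      using st beta_pos by (simp add: mult_left_mono)
    also have "\<dots> \<le> (norm (lam 1 - lstar))\<^sup>2 + 2 * \<beta> * (\<Sum>i = 1..n - 1. \<epsilon> i) + 2 * \<beta> * \<epsilon> n"
      using Suc.IH by simp
    also have "\<dots> = (norm (lam 1 - lstar))\<^sup>2 + 2 * \<beta> * (\<Sum>i = 1..Suc n - 1. \<epsilon> i)"
    proof -
      have "{1..n} = insert n {1..n - 1}" using Suc.hyps by auto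
      then have "(\<Sum>i = 1..n. \<epsilon> i) = \<epsilon> n + (\<Sum>i = 1..n - 1. \<epsilon> i)"
        using Suc.hyps by (simp add: sum.insert_if)
      then show ?thesis by (simp add: algebra_simps)
    qed
    finally show ?case .
  qed
  have "norm (lam t - lstar) = sqrt ((norm (lam t - lstar))\<^sup>2)" by simp
  also have "\<dots> \<le> sqrt ((norm (lam 1 - lstar))\<^sup>2 + 2 * \<beta> * (\<Sum>i = 1..t - 1. \<epsilon> i))"
    using sq by (rule real_sqrt_le_mono)
  finally show ?thesis .
qed

end
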